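(* Let $G$ be a 2-connected graph with no $K_4$ minor and let $(s,t)$ be a split pair of $G$. Then there is a unique orientation of the edges of $G$ that is acyclic and has $s$ as its unique source and $t$ as its unique sink. In this orientation every simple path from $s$ to $t$ is a directed path, and every directed path can be extended to a directed path from $s$ to $t$.
   Context: A pair $(s,t)$ of distinct vertices of a 2-connected graph $G$ with no $K_4$ minor is a split pair if the graph obtained from $G$ by adding an edge between $s$ and $t$ still has no $K_4$ minor. In an oriented graph, a source is a vertex with only outgoing edges and a sink is a vertex with only incoming edges. *)

theory Defs
  imports Main
begin

definition graph :: "'a set \<Rightarrow> 'a set set \<Rightarrow> bool" where
  "graph V E \<longleftrightarrow> finite V \<and> (\<forall>e\<in>E. \<exists>u v. e = {u, v} \<and> u \<noteq> v \<and> u \<in> V \<and> v \<in> V)"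

definition adj_in :: "'a set set \<Rightarrow> 'a set \<Rightarrow> ('a \<times> 'a) set" where
  "adj_in E S = {(u, v). u \<in> S \<and> v \<in> S \<and> {u, v} \<in> E}"

definition connected_set :: "'a set set \<Rightarrow> 'a set \<Rightarrow> bool" where
  "connected_set E S \<longleftrightarrow> S \<noteq> {} \<and> (\<forall>u\<in>S. \<forall>v\<in>S. (u, v) \<in> (adj_in E S)\<^sup>*)"

definition two_connected :: "'a set \<Rightarrow> 'a set set \<Rightarrow> bool" where
  "two_connected V E \<longleftrightarrow> card V \<ge> 3 \<and> connected_set E V \<and>
     (\<forall>x\<in>V. connected_set E (V - {x}))"

definition has_K4_minor :: "'a set \<Rightarrow> 'a set set \<Rightarrow> bool" where
  "has_K4_minor V E \<longleftrightarrow> (\<exists>B :: nat \<Rightarrow> 'a set.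
      (\<forall>i<4. B i \<subseteq> V \<and> connected_set E (B i)) \<and>
      (\<forall>i<4. \<forall>j<4. i \<noteq> j \<longrightarrow> B i \<inter> B j = {} \<and>
          (\<exists>u\<in>B i. \<exists>v\<in>B j. {u, v} \<in> E)))"

definition split_pair :: "'a set \<Rightarrow> 'a set set \<Rightarrow> 'a \<Rightarrow> 'a \<Rightarrow> bool" where
  "split_pair V E s t \<longleftrightarrow> s \<in> V \<and> t \<in> V \<and> s \<noteq> t \<and>
     \<not> has_K4_minor V (insert {s, t} E)"

definition orientation :: "'a set set \<Rightarrow> ('a \<times> 'a) set \<Rightarrow> bool" where
  "orientation E D \<longleftrightarrow> (\<forall>(u, v)\<in>D. {u, v} \<in> E) \<and>
     (\<forall>u v. {u, v} \<in> E \<longrightarrow> ((u, v) \<in> D \<longleftrightarrow> (v, u) \<notin> D))"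

definition is_source :: "('a \<times> 'a) set \<Rightarrow> 'a \<Rightarrow> bool" where
  "is_source D v \<longleftrightarrow> (\<forall>u. (u, v) \<notin> D)"

definition is_sink :: "('a \<times> 'a) set \<Rightarrow> 'a \<Rightarrow> bool" where
  "is_sink D v \<longleftrightarrow> (\<forall>u. (v, u) \<notin> D)"

definition simple_path :: "'a set \<Rightarrow> 'a set set \<Rightarrow> 'a list \<Rightarrow> bool" where
  "simple_path V E p \<longleftrightarrow> p \<noteq> [] \<and> distinct p \<and> set p \<subseteq> V \<and>
     (\<forall>i. Suc i < length p \<longrightarrow> {p ! i, p ! Suc i} \<in> E)"

definition dir_path :: "'a set \<Rightarrow> ('a \<times> 'a) set \<Rightarrow> 'a list \<Rightarrow> bool" where
  "dir_path V D p \<longleftrightarrow> p \<noteq> [] \<and> distinct p \<and> set p \<subseteq> V \<and>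
     (\<forall>i. Suc i < length p \<longrightarrow> (p ! i, p ! Suc i) \<in> D)"

end

theory Submission
  imports Defs
begin


definition adjs :: "'a set set \<Rightarrow> 'a set \<Rightarrow> 'a set \<Rightarrow> bool" where
  "adjs F X Y \<longleftrightarrow> (\<exists>u\<in>X. \<exists>v\<in>Y. {u, v} \<in> F)"

lemma adjs_sym: "adjs F X Y \<Longrightarrow> adjs F Y X"
  unfolding adjs_def by (metis insert_commute)

lemma K4I:
  assumes "S0 \<subseteq> V" "S1 \<subseteq> V" "S2 \<subseteq> V" "S3 \<subseteq> V"
    and "connected_set F S0" "connected_set F S1" "connected_set F S2" "connected_set F S3"
    and "S0 \<inter> S1 = {}" "S0 \<inter> S2 = {}" "S0 \<inter> S3 = {}" "S1 \<inter> S2 = {}" "S1 \<inter> S3 = {}" "S2 \<inter> S3 = {}"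
    and "adjs F S0 S1" "adjs F S0 S2" "adjs F S0 S3" "adjs F S1 S2" "adjs F S1 S3" "adjs F S2 S3"
  shows "has_K4_minor V F"
proof -
  define B where "B = (\<lambda>i::nat. if i = 0 then S0 else if i = 1 then S1 else if i = 2 then S2 else S3)"
  have c4: "i < 4 \<longleftrightarrow> i = 0 \<or> i = 1 \<or> i = 2 \<or> i = (3::nat)" for i by auto
  have A: "\<forall>i<4. B i \<subseteq> V \<and> connected_set F (B i)"
    using assms unfolding c4 B_def by auto
  have D: "\<forall>i<4. \<forall>j<4. i \<noteq> j \<longrightarrow> B i \<inter> B j = {}"
    using assms unfolding c4 B_def by (auto simp: Int_commute)
  have J: "\<forall>i<4. \<forall>j<4. i \<noteq> j \<longrightarrow> adjs F (B i) (B j)"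
    using assms adjs_sym unfolding c4 B_def by auto
  show ?thesis unfolding has_K4_minor_def
    apply (rule exI[of _ B])
    using A D J unfolding adjs_def by blast
qed

lemma adj_in_sym: "sym (adj_in F S)"
  unfolding adj_in_def sym_def by (auto simp: insert_commute)

lemma conn_root:
  assumes "r \<in> S" "\<forall>x\<in>S. (x, r) \<in> (adj_in F S)\<^sup>*"
  shows "connected_set F S"
proof -
  have sy: "sym ((adj_in F S)\<^sup>*)" using adj_in_sym sym_rtrancl by blast
  show ?thesis unfolding connected_set_def
  proof (intro conjI ballI)
    show "S \<noteq> {}" using assms by auto
    fix u v assume "u \<in> S" "v \<in> S"
    then have "(u, r) \<in> (adj_in F S)\<^sup>*" "(v, r) \<in> (adj_in F S)\<^sup>*" using assms by auto
    then have "(r, v) \<in> (adj_in F S)\<^sup>*" using sy by (meson symD)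
    with \<open>(u, r) \<in> _\<close> show "(u, v) \<in> (adj_in F S)\<^sup>*" by (rule rtrancl_trans)
  qed
qed

lemma chain_reach:
  assumes "\<forall>k. lo \<le> k \<longrightarrow> k < hi \<longrightarrow> {f k, f (Suc k)} \<in> F" "f ` {lo..hi} \<subseteq> S"
  shows "k \<in> {lo..hi} \<Longrightarrow> (f k, f lo) \<in> (adj_in F S)\<^sup>*"
proof (induction k)
  case 0 then show ?case by auto
next
  case (Suc k)
  show ?case
  proof (cases "Suc k = lo")
    case True then show ?thesis by simp
  next
    case False
    then have k: "k \<in> {lo..hi}" "lo \<le> k" "k < hi" using Suc.prems by auto
    have "(f (Suc k), f k) \<in> adj_in F S"
      using assms k Suc.prems unfolding adj_in_def by (auto simp: insert_commute)
    then show ?thesis using Suc.IH[OF k(1)] by (meson converse_rtrancl_into_rtrancl)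
  qed
qed



lemma K4_from_chords:
  fixes q c1 c2 :: "nat \<Rightarrow> 'a"
  assumes qV: "q ` {0..m} \<subseteq> V"
    and qinj: "inj_on q {0..m}"
    and qE: "\<forall>k<m. {q k, q (Suc k)} \<in> F"
    and qcyc: "{q 0, q m} \<in> F"
    and ord: "a < b" "b < a'" "a' < b'" "b' \<le> m"
    and c1: "c1 0 = q a" "c1 n1 = q a'" "\<forall>k<n1. {c1 k, c1 (Suc k)} \<in> F"
            "c1 ` {0..n1} \<subseteq> V" "\<forall>k. 0 < k \<longrightarrow> k < n1 \<longrightarrow> c1 k \<notin> q ` {0..m}"
    and c2: "c2 0 = q b" "c2 n2 = q b'" "\<forall>k<n2. {c2 k, c2 (Suc k)} \<in> F"
            "c2 ` {0..n2} \<subseteq> V" "\<forall>k. 0 < k \<longrightarrow> k < n2 \<longrightarrow> c2 k \<notin> q ` {0..m}"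
    and disj: "c1 ` {0..n1} \<inter> c2 ` {0..n2} = {}"
  shows "has_K4_minor V F"
proof -
  have n1: "n1 > 0"
  proof (rule ccontr)
    assume "\<not> n1 > 0" then have "q a = q a'" using c1 by auto
    moreover have "a \<in> {0..m}" "a' \<in> {0..m}" using ord by auto
    ultimately show False using inj_onD[OF qinj] ord by fastforce
  qed
  have n2: "n2 > 0"
  proof (rule ccontr)
    assume "\<not> n2 > 0" then have "q b = q b'" using c2 by auto
    moreover have "b \<in> {0..m}" "b' \<in> {0..m}" using ord by auto
    ultimately show False using inj_onD[OF qinj] ord by fastforce
  qed
  define S0 where "S0 = q ` {a..<b} \<union> c1 ` {0..<n1}"
  define S1 where "S1 = q ` {b..<a'} \<union> c2 ` {0..<n2}"
  define S2 where "S2 = q ` {a'..<b'}"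
  define S3 where "S3 = q ` {b'..m} \<union> q ` {0..<a}"
  have qim: "q ` A \<inter> q ` B = q ` (A \<inter> B)" if "A \<subseteq> {0..m}" "B \<subseteq> {0..m}" for A B
    using inj_on_image_Int[OF qinj that] by simp
  have qdis: "q ` A \<inter> q ` B = {}" if "A \<subseteq> {0..m}" "B \<subseteq> {0..m}" "A \<inter> B = {}" for A B
    using qim[OF that(1,2)] that(3) by simp
  have c1q: "x = q a \<or> x \<notin> q ` {0..m}" if "x \<in> c1 ` {0..<n1}" for x
  proof -
    obtain k where k: "k < n1" "x = c1 k" using \<open>x \<in> c1 ` {0..<n1}\<close> by auto
    show ?thesis
    proof (cases "k = 0")
      case True then show ?thesis using k c1(1) by simp
    next
      case False then show ?thesis using k c1(5) by auto
    qed
  qed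
  have c2q: "x = q b \<or> x \<notin> q ` {0..m}" if "x \<in> c2 ` {0..<n2}" for x
  proof -
    obtain k where k: "k < n2" "x = c2 k" using \<open>x \<in> c2 ` {0..<n2}\<close> by auto
    show ?thesis
    proof (cases "k = 0")
      case True then show ?thesis using k c2(1) by simp
    next
      case False then show ?thesis using k c2(5) by auto
    qed
  qed
  have qmem: "q i \<in> q ` A \<longleftrightarrow> i \<in> A" if "i \<le> m" "A \<subseteq> {0..m}" for i A
    using qinj that unfolding inj_on_def by (auto 4 3 dest: subsetD)
  have c1s: "c1 ` {0..<n1} \<subseteq> c1 ` {0..n1}" "c2 ` {0..<n2} \<subseteq> c2 ` {0..n2}" by auto
  have V0: "S0 \<subseteq> V" using qV c1(4) ord unfolding S0_def by auto
  have V1: "S1 \<subseteq> V" using qV c2(4) ord unfolding S1_def by auto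
  have V2: "S2 \<subseteq> V" using qV ord unfolding S2_def by auto
  have V3: "S3 \<subseteq> V" using qV ord unfolding S3_def by auto
  have D0q: "c1 ` {0..<n1} \<inter> q ` A = {}" if "A \<subseteq> {0..m}" "a \<notin> A" for A
  proof -
    { fix x assume "x \<in> c1 ` {0..<n1}" "x \<in> q ` A"
      then have "x = q a" using c1q that by auto
      with \<open>x \<in> q ` A\<close> have False using qmem[of a A] that ord by auto }
    then show ?thesis by auto
  qed
  have D1q: "c2 ` {0..<n2} \<inter> q ` A = {}" if "A \<subseteq> {0..m}" "b \<notin> A" for A
  proof -
    { fix x assume "x \<in> c2 ` {0..<n2}" "x \<in> q ` A"
      then have "x = q b" using c2q that by auto
      with \<open>x \<in> q ` A\<close> have False using qmem[of b A] that ord by auto }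
    then show ?thesis by auto
  qed
  have D01: "S0 \<inter> S1 = {}"
  proof -
    have "q ` {a..<b} \<inter> q ` {b..<a'} = {}" by (rule qdis[of "{a..<b}" "{b..<a'}"]) (use ord in auto)
    moreover have "q ` {a..<b} \<inter> c2 ` {0..<n2} = {}" 
    proof -
      have "c2 ` {0..<n2} \<inter> q ` {a..<b} = {}" by (rule D1q) (use ord in auto)
      then show ?thesis by blast
    qed
    moreover have "c1 ` {0..<n1} \<inter> q ` {b..<a'} = {}" by (rule D0q[of "{b..<a'}"]) (use ord in auto)
    moreover have "c1 ` {0..<n1} \<inter> c2 ` {0..<n2} = {}" using disj c1s by blast
    ultimately show ?thesis unfolding S0_def S1_def Int_Un_distrib Int_Un_distrib2 by simp
  qed
  have D02: "S0 \<inter> S2 = {}"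
  proof -
    have "q ` {a..<b} \<inter> q ` {a'..<b'} = {}" by (rule qdis[of "{a..<b}" "{a'..<b'}"]) (use ord in auto)
    moreover have "c1 ` {0..<n1} \<inter> q ` {a'..<b'} = {}" by (rule D0q[of "{a'..<b'}"]) (use ord in auto)
    ultimately show ?thesis unfolding S0_def S2_def Int_Un_distrib Int_Un_distrib2 by simp
  qed
  have D03: "S0 \<inter> S3 = {}"
  proof -
    have "q ` {a..<b} \<inter> q ` ({b'..m} \<union> {0..<a}) = {}" by (rule qdis[of "{a..<b}" "{b'..m} \<union> {0..<a}"]) (use ord in auto)
    moreover have "c1 ` {0..<n1} \<inter> q ` ({b'..m} \<union> {0..<a}) = {}" by (rule D0q[of "{b'..m} \<union> {0..<a}"]) (use ord in auto)
    ultimately show ?thesis unfolding S0_def S3_def image_Un[symmetric] Int_Un_distrib Int_Un_distrib2 by simp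
  qed
  have D12: "S1 \<inter> S2 = {}"
  proof -
    have "q ` {b..<a'} \<inter> q ` {a'..<b'} = {}" by (rule qdis[of "{b..<a'}" "{a'..<b'}"]) (use ord in auto)
    moreover have "c2 ` {0..<n2} \<inter> q ` {a'..<b'} = {}" by (rule D1q[of "{a'..<b'}"]) (use ord in auto)
    ultimately show ?thesis unfolding S1_def S2_def Int_Un_distrib Int_Un_distrib2 by simp
  qed
  have D13: "S1 \<inter> S3 = {}"
  proof -
    have "q ` {b..<a'} \<inter> q ` ({b'..m} \<union> {0..<a}) = {}" by (rule qdis[of "{b..<a'}" "{b'..m} \<union> {0..<a}"]) (use ord in auto)
    moreover have "c2 ` {0..<n2} \<inter> q ` ({b'..m} \<union> {0..<a}) = {}" by (rule D1q[of "{b'..m} \<union> {0..<a}"]) (use ord in auto)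
    ultimately show ?thesis unfolding S1_def S3_def image_Un[symmetric] Int_Un_distrib Int_Un_distrib2 by simp
  qed
  have D23: "S2 \<inter> S3 = {}"
  proof -
    have "q ` {a'..<b'} \<inter> q ` ({b'..m} \<union> {0..<a}) = {}" by (rule qdis[of "{a'..<b'}" "{b'..m} \<union> {0..<a}"]) (use ord in auto)
    then show ?thesis unfolding S2_def S3_def image_Un[symmetric] by simp
  qed
  have A01: "adjs F S0 S1" unfolding adjs_def S0_def S1_def
    using qE[rule_format, of "b - 1"] ord
    by (intro bexI[of _ "q (b - 1)"] bexI[of _ "q b"]) (auto simp: Suc_diff_1)
  have A12: "adjs F S1 S2" unfolding adjs_def S1_def S2_def
    using qE[rule_format, of "a' - 1"] ord
    by (intro bexI[of _ "q (a' - 1)"] bexI[of _ "q a'"]) (auto simp: Suc_diff_1)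
  have A23: "adjs F S2 S3" unfolding adjs_def S2_def S3_def
    using qE[rule_format, of "b' - 1"] ord
    by (intro bexI[of _ "q (b' - 1)"] bexI[of _ "q b'"]) (auto simp: Suc_diff_1)
  have A03: "adjs F S0 S3"
  proof (cases "a = 0")
    case True
    then show ?thesis unfolding adjs_def S0_def S3_def using qcyc ord
      by (intro bexI[of _ "q 0"] bexI[of _ "q m"]) auto
  next
    case False
    then show ?thesis unfolding adjs_def S0_def S3_def using qE[rule_format, of "a - 1"] ord
      by (intro bexI[of _ "q a"] bexI[of _ "q (a - 1)"]) (auto simp: Suc_diff_1 insert_commute)
  qed
  have A02: "adjs F S0 S2" unfolding adjs_def S0_def S2_def
    using c1(3)[rule_format, of "n1 - 1"] n1 c1(2) ord
    by (intro bexI[of _ "c1 (n1 - 1)"] bexI[of _ "q a'"]) (auto simp: Suc_diff_1)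
  have A13: "adjs F S1 S3" unfolding adjs_def S1_def S3_def
    using c2(3)[rule_format, of "n2 - 1"] n2 c2(2) ord
    by (intro bexI[of _ "c2 (n2 - 1)"] bexI[of _ "q b'"]) (auto simp: Suc_diff_1)
  have qsub: "\<forall>k. lo \<le> k \<longrightarrow> k < hi \<longrightarrow> {q k, q (Suc k)} \<in> F" if "hi \<le> m" for lo hi
    using qE that by auto
  have c1sub: "\<forall>k. 0 \<le> k \<longrightarrow> k < n1 - 1 \<longrightarrow> {c1 k, c1 (Suc k)} \<in> F"
    using c1(3) by auto
  have c2sub: "\<forall>k. 0 \<le> k \<longrightarrow> k < n2 - 1 \<longrightarrow> {c2 k, c2 (Suc k)} \<in> F"
    using c2(3) by auto
  have C0: "connected_set F S0"
  proof (rule conn_root[of "q a"])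
    show "q a \<in> S0" unfolding S0_def using ord by auto
    have s1: "q ` {a..b-1} \<subseteq> S0" unfolding S0_def
    proof -
      have "{a..b-1} \<subseteq> {a..<b}" using ord by auto
      then show "q ` {a..b-1} \<subseteq> q ` {a..<b} \<union> c1 ` {0..<n1}" by blast
    qed
    have s2: "c1 ` {0..n1-1} \<subseteq> S0" unfolding S0_def
    proof -
      have "{0..n1-1} \<subseteq> {0..<n1}" using n1 by auto
      then show "c1 ` {0..n1-1} \<subseteq> q ` {a..<b} \<union> c1 ` {0..<n1}" by blast
    qed
    have r1: "(q k, q a) \<in> (adj_in F S0)\<^sup>*" if "k \<in> {a..b-1}" for k
      using chain_reach[OF qsub s1 that] ord by simp
    have r2: "(c1 k, q a) \<in> (adj_in F S0)\<^sup>*" if "k \<in> {0..n1-1}" for k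
      using chain_reach[OF c1sub s2 that] c1(1) by simp
    show "\<forall>x\<in>S0. (x, q a) \<in> (adj_in F S0)\<^sup>*"
    proof
      fix x assume "x \<in> S0"
      then consider k where "k \<in> {a..<b}" "x = q k" | k where "k \<in> {0..<n1}" "x = c1 k"
        unfolding S0_def by blast
      then show "(x, q a) \<in> (adj_in F S0)\<^sup>*"
      proof cases
        case 1 then show ?thesis using r1[of k] by auto
      next
        case 2 then show ?thesis using r2[of k] by auto
      qed
    qed
  qed
  have C1: "connected_set F S1"
  proof (rule conn_root[of "q b"])
    show "q b \<in> S1" unfolding S1_def using ord by auto
    have s1: "q ` {b..a'-1} \<subseteq> S1" unfolding S1_def
    proof -
      have "{b..a'-1} \<subseteq> {b..<a'}" using ord by auto
      then show "q ` {b..a'-1} \<subseteq> q ` {b..<a'} \<union> c2 ` {0..<n2}" by blast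
    qed
    have s2: "c2 ` {0..n2-1} \<subseteq> S1" unfolding S1_def
    proof -
      have "{0..n2-1} \<subseteq> {0..<n2}" using n2 by auto
      then show "c2 ` {0..n2-1} \<subseteq> q ` {b..<a'} \<union> c2 ` {0..<n2}" by blast
    qed
    have r1: "(q k, q b) \<in> (adj_in F S1)\<^sup>*" if "k \<in> {b..a'-1}" for k
      using chain_reach[OF qsub s1 that] ord by simp
    have r2: "(c2 k, q b) \<in> (adj_in F S1)\<^sup>*" if "k \<in> {0..n2-1}" for k
      using chain_reach[OF c2sub s2 that] c2(1) by simp
    show "\<forall>x\<in>S1. (x, q b) \<in> (adj_in F S1)\<^sup>*"
    proof
      fix x assume "x \<in> S1"
      then consider k where "k \<in> {b..<a'}" "x = q k" | k where "k \<in> {0..<n2}" "x = c2 k"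
        unfolding S1_def by blast
      then show "(x, q b) \<in> (adj_in F S1)\<^sup>*"
      proof cases
        case 1 then show ?thesis using r1[of k] by auto
      next
        case 2 then show ?thesis using r2[of k] by auto
      qed
    qed
  qed
  have C2: "connected_set F S2"
  proof (rule conn_root[of "q a'"])
    show "q a' \<in> S2" unfolding S2_def using ord by auto
    have s1: "q ` {a'..b'-1} \<subseteq> S2" unfolding S2_def
    proof -
      have "{a'..b'-1} \<subseteq> {a'..<b'}" using ord by auto
      then show "q ` {a'..b'-1} \<subseteq> q ` {a'..<b'}" by blast
    qed
    have r1: "(q k, q a') \<in> (adj_in F S2)\<^sup>*" if "k \<in> {a'..b'-1}" for k
      using chain_reach[OF qsub s1 that] ord by simp
    show "\<forall>x\<in>S2. (x, q a') \<in> (adj_in F S2)\<^sup>*"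
    proof
      fix x assume "x \<in> S2"
      then obtain k where "k \<in> {a'..<b'}" "x = q k" unfolding S2_def by blast
      then show "(x, q a') \<in> (adj_in F S2)\<^sup>*" using r1[of k] by auto
    qed
  qed
  have C3: "connected_set F S3"
  proof (rule conn_root[of "q b'"])
    show "q b' \<in> S3" unfolding S3_def using ord by auto
    have s1: "q ` {b'..m} \<subseteq> S3" unfolding S3_def by blast
    have r1: "(q k, q b') \<in> (adj_in F S3)\<^sup>*" if "k \<in> {b'..m}" for k
      using chain_reach[OF qsub s1 that] by simp
    have r2: "(q k, q b') \<in> (adj_in F S3)\<^sup>*" if "k \<in> {0..<a}" for k
    proof -
      have s2: "q ` {0..a-1} \<subseteq> S3" unfolding S3_def
      proof -
        have "{0..a-1} \<subseteq> {0..<a}" using that by auto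
        then show "q ` {0..a-1} \<subseteq> q ` {b'..m} \<union> q ` {0..<a}" by blast
      qed
      have "(q k, q 0) \<in> (adj_in F S3)\<^sup>*"
        using chain_reach[OF qsub s2] that ord by simp
      moreover have "(q 0, q m) \<in> adj_in F S3"
      proof -
        have "q 0 \<in> S3" "q m \<in> S3" using that ord unfolding S3_def by auto
        then show ?thesis using qcyc unfolding adj_in_def by auto
      qed
      moreover have "(q m, q b') \<in> (adj_in F S3)\<^sup>*" using r1 ord by auto
      ultimately show ?thesis by (meson rtrancl_into_rtrancl rtrancl_trans)
    qed
    show "\<forall>x\<in>S3. (x, q b') \<in> (adj_in F S3)\<^sup>*"
    proof
      fix x assume "x \<in> S3"
      then consider k where "k \<in> {b'..m}" "x = q k" | k where "k \<in> {0..<a}" "x = q k"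
        unfolding S3_def by blast
      then show "(x, q b') \<in> (adj_in F S3)\<^sup>*"
      proof cases
        case 1 then show ?thesis using r1[of k] by auto
      next
        case 2 then show ?thesis using r2[of k] by auto
      qed
    qed
  qed
  show ?thesis
    by (rule K4I[OF V0 V1 V2 V3 C0 C1 C2 C3 D01 D02 D03 D12 D13 D23 A01 A02 A03 A12 A13 A23])
qed



lemma first_cross:
  fixes R :: "nat \<Rightarrow> 'a"
  assumes "R 0 \<in> I1" "R L \<in> I2" "I1 \<inter> I2 = {}" "I1 \<subseteq> QS" "\<forall>k\<le>L. R k \<in> QS \<longrightarrow> R k \<in> I1 \<union> I2"
  shows "\<exists>k l. k < l \<and> l \<le> L \<and> R k \<in> I1 \<and> R l \<in> I2 \<and> (\<forall>j. k < j \<longrightarrow> j < l \<longrightarrow> R j \<notin> QS)"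
proof -
  define l where "l = (LEAST l. R l \<in> I2)"
  have l2: "R l \<in> I2" unfolding l_def by (rule LeastI[of "\<lambda>l. R l \<in> I2" L]) (use assms in auto)
  have lL: "l \<le> L" unfolding l_def by (rule Least_le) (use assms in auto)
  have lmin: "R j \<notin> I2" if "j < l" for j using not_less_Least[of j "\<lambda>l. R l \<in> I2"] that l_def by auto
  have l0: "0 < l"
  proof (rule ccontr)
    assume "\<not> 0 < l" then have "l = 0" by simp
    then show False using l2 assms(1,3) by auto
  qed
  define K where "K = {k. k < l \<and> R k \<in> QS}"
  have K0: "0 \<in> K" unfolding K_def using l0 assms(1,4) by auto
  have Kf: "finite K" unfolding K_def by auto
  define k where "k = Max K"
  have kK: "k \<in> K" unfolding k_def using K0 Kf Max_in by blast
  then have kl: "k < l" "R k \<in> QS" unfolding K_def by auto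
  then have "R k \<in> I1 \<union> I2" using assms(5) lL by auto
  then have "R k \<in> I1" using lmin[OF kl(1)] by auto
  moreover have "\<forall>j. k < j \<longrightarrow> j < l \<longrightarrow> R j \<notin> QS"
  proof (intro allI impI)
    fix j assume "k < j" "j < l"
    show "R j \<notin> QS"
    proof
      assume "R j \<in> QS" then have "j \<in> K" unfolding K_def using \<open>j < l\<close> by auto
      then have "j \<le> k" unfolding k_def using Kf by auto
      then show False using \<open>k < j\<close> by simp
    qed
  qed
  ultimately show ?thesis using kl l2 lL by blast
qed

lemma sp_facts:
  assumes "simple_path V E p"
  shows "p \<noteq> []" "distinct p" "set p \<subseteq> V" "\<And>i. Suc i < length p \<Longrightarrow> {p ! i, p ! Suc i} \<in> E"
  using assms unfolding simple_path_def by auto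

lemma cons_K4:
  assumes P: "simple_path V E p" "hd p = s" "last p = t"
    and Q: "simple_path V E q" "hd q = s" "last q = t"
    and ij: "i1 < i2" "i2 < length p" "j1 < j2" "j2 < length q"
    and xy: "p!i1 = q!j2" "p!i2 = q!j1"
  shows "has_K4_minor V (insert {s,t} E)"
proof -
  define F where "F = insert {s,t} E"
  note pf = sp_facts[OF P(1)] and qf = sp_facts[OF Q(1)]
  define m where "m = length q - 1"
  define n where "n = length p - 1"
  have mlen: "m < length q" "Suc m = length q" using qf(1) unfolding m_def by (cases q; auto)+
  have nlen: "n < length p" "Suc n = length p" using pf(1) unfolding n_def by (cases p; auto)+
  have q0: "q!0 = s" using Q(2) qf(1) hd_conv_nth by metis
  have qm: "q!m = t" using Q(3) qf(1) last_conv_nth m_def by metis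
  have p0: "p!0 = s" using P(2) pf(1) hd_conv_nth by metis
  have pn: "p!n = t" using P(3) pf(1) last_conv_nth n_def by metis
  have pinj: "\<And>a b. a < length p \<Longrightarrow> b < length p \<Longrightarrow> p!a = p!b \<Longrightarrow> a = b"
    using pf(2) nth_eq_iff_index_eq by blast
  have qinj0: "\<And>a b. a \<le> m \<Longrightarrow> b \<le> m \<Longrightarrow> q!a = q!b \<Longrightarrow> a = b"
    using qf(2) nth_eq_iff_index_eq mlen by (metis le_imp_less_Suc)
  have qinj: "inj_on (nth q) {0..m}" using qinj0 unfolding inj_on_def by auto
  have qdis: "nth q ` A \<inter> nth q ` B = {}" if "A \<subseteq> {0..m}" "B \<subseteq> {0..m}" "A \<inter> B = {}" for A B
    using inj_on_image_Int[OF qinj that(1,2)] that(3) by simp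
  have j1pos: "0 < j1"
  proof (rule ccontr)
    assume "\<not> 0 < j1" then have "p!i2 = p!0" using xy q0 p0 by simp
    then have "i2 = 0" using pinj[of i2 0] ij pf(1) by auto
    then show False using ij by simp
  qed
  have j2m: "j2 < m"
  proof (rule ccontr)
    assume "\<not> j2 < m" then have "j2 = m" using ij mlen by simp
    then have "p!i1 = p!n" using xy qm pn by simp
    then have "i1 = n" using pinj ij nlen by auto
    then show False using ij nlen by simp
  qed
  have qE: "\<forall>k<m. {q!k, q!Suc k} \<in> F" using qf(4) mlen unfolding F_def by auto
  have qcyc: "{q!0, q!m} \<in> F" unfolding F_def using q0 qm by simp
  have qV: "nth q ` {0..m} \<subseteq> V" using qf(3) mlen by (auto intro!: nth_mem)
  have pE: "\<And>k. Suc k < length p \<Longrightarrow> {p!k, p!Suc k} \<in> F" using pf(4) unfolding F_def by auto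
  have pV: "\<And>k. k < length p \<Longrightarrow> p!k \<in> V" using pf(3) nth_mem by blast
  define QS where "QS = nth q ` {0..m}"
  obtain k0 l0 where A: "k0 < l0" "l0 \<le> i1" "p!k0 \<in> nth q ` {0..<j1}" "p!l0 \<in> nth q ` {j1<..<m}"
    "\<forall>j. k0 < j \<longrightarrow> j < l0 \<longrightarrow> p!j \<notin> QS"
  proof -
    have "\<exists>k l. k < l \<and> l \<le> i1 \<and> p!k \<in> nth q ` {0..<j1} \<and> p!l \<in> nth q ` {j1<..<m} \<and>
       (\<forall>j. k < j \<longrightarrow> j < l \<longrightarrow> p!j \<notin> QS)"
    proof (rule first_cross[where R="nth p"])
      show "p!0 \<in> nth q ` {0..<j1}" using p0 q0 j1pos by (metis atLeastLessThan_iff image_eqI le0)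
      show "p!i1 \<in> nth q ` {j1<..<m}" using xy ij j2m by auto
      show "nth q ` {0..<j1} \<inter> nth q ` {j1<..<m} = {}" by (rule qdis) (use ij j2m in auto)
      show "nth q ` {0..<j1} \<subseteq> QS" unfolding QS_def using ij j2m by auto
      show "\<forall>k\<le>i1. p!k \<in> QS \<longrightarrow> p!k \<in> nth q ` {0..<j1} \<union> nth q ` {j1<..<m}"
      proof (intro allI impI)
        fix k assume k: "k \<le> i1" "p!k \<in> QS"
        then obtain l where l: "l \<le> m" "p!k = q!l" unfolding QS_def by auto
        have "l \<noteq> j1"
        proof
          assume "l = j1" then have "p!k = p!i2" using l xy by simp
          then show False using pinj[of k i2] k ij by auto
        qed
        moreover have "l \<noteq> m"
        proof
          assume "l = m" then have "p!k = p!n" using l qm pn by simp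
          then show False using pinj[of k n] k ij nlen by auto
        qed
        ultimately have "l \<in> {0..<j1} \<or> l \<in> {j1<..<m}" using l by auto
        then show "p!k \<in> nth q ` {0..<j1} \<union> nth q ` {j1<..<m}" using l by blast
      qed
    qed
    then show ?thesis using that by blast
  qed
  obtain al where al: "al < j1" "p!k0 = q!al" using A(3) by auto
  obtain al' where al': "j1 < al'" "al' < m" "p!l0 = q!al'" using A(4) by auto
  define L where "L = n - i2"
  have i2n: "i2 \<le> n" using ij nlen by simp
  obtain k1 l1 where B: "k1 < l1" "l1 \<le> L" "p!(i2+k1) \<in> nth q ` {al<..<al'}"
    "p!(i2+l1) \<in> nth q ` ({0..<al} \<union> {al'<..m})"
    "\<forall>j. k1 < j \<longrightarrow> j < l1 \<longrightarrow> p!(i2+j) \<notin> QS"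
  proof -
    have "\<exists>k l. k < l \<and> l \<le> L \<and> p!(i2+k) \<in> nth q ` {al<..<al'} \<and> p!(i2+l) \<in> nth q ` ({0..<al} \<union> {al'<..m}) \<and>
       (\<forall>j. k < j \<longrightarrow> j < l \<longrightarrow> p!(i2+j) \<notin> QS)"
    proof (rule first_cross[where R="\<lambda>k. p!(i2+k)"])
      show "p!(i2+0) \<in> nth q ` {al<..<al'}" using xy al al' by auto
      show "p!(i2+L) \<in> nth q ` ({0..<al} \<union> {al'<..m})" using pn qm al' i2n unfolding L_def
        by (metis atLeastAtMost_iff greaterThanAtMost_iff image_eqI le_add_diff_inverse order_refl UnI2)
      show "nth q ` {al<..<al'} \<inter> nth q ` ({0..<al} \<union> {al'<..m}) = {}" by (rule qdis) (use al al' in auto)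
      show "nth q ` {al<..<al'} \<subseteq> QS" unfolding QS_def using al' by auto
      show "\<forall>k\<le>L. p!(i2+k) \<in> QS \<longrightarrow> p!(i2+k) \<in> nth q ` {al<..<al'} \<union> nth q ` ({0..<al} \<union> {al'<..m})"
      proof (intro allI impI)
        fix k assume k: "k \<le> L" "p!(i2+k) \<in> QS"
        then obtain l where l: "l \<le> m" "p!(i2+k) = q!l" unfolding QS_def by auto
        have ik: "i2 + k < length p" using k nlen i2n unfolding L_def by simp
        have "l \<noteq> al"
        proof
          assume "l = al" then have "p!(i2+k) = p!k0" using l al by simp
          then show False using pinj[of "i2+k" k0] ik A ij nlen by auto
        qed
        moreover have "l \<noteq> al'"
        proof
          assume "l = al'" then have "p!(i2+k) = p!l0" using l al' by simp
          then show False using pinj[of "i2+k" l0] ik A ij nlen by auto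
        qed
        ultimately have "l \<in> {al<..<al'} \<or> l \<in> ({0..<al} \<union> {al'<..m})" using l by auto
        then show "p!(i2+k) \<in> nth q ` {al<..<al'} \<union> nth q ` ({0..<al} \<union> {al'<..m})"
          using l by blast
      qed
    qed
    then show ?thesis using that by blast
  qed
  obtain ga where ga: "al < ga" "ga < al'" "p!(i2+k1) = q!ga" using B(3) by auto
  obtain de0 where de0: "de0 \<in> {0..<al} \<union> {al'<..m}" "p!(i2+l1) = q!de0" using B(4) by (meson imageE)
  obtain de where de: "de < al \<or> (al' < de \<and> de \<le> m)" "p!(i2+l1) = q!de" using de0 by auto
  have l1n: "i2 + l1 \<le> n" using B(2) i2n unfolding L_def by simp
  define cA where "cA = (\<lambda>k. p!(k0+k))"
  define nA where "nA = l0 - k0"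
  have cA: "cA 0 = q!al" "cA nA = q!al'" "\<forall>k<nA. {cA k, cA (Suc k)} \<in> F"
     "cA ` {0..nA} \<subseteq> V" "\<forall>k. 0 < k \<longrightarrow> k < nA \<longrightarrow> cA k \<notin> nth q ` {0..m}"
  proof -
    show "cA 0 = q!al" using al cA_def by simp
    show "cA nA = q!al'" using al' A unfolding cA_def nA_def by simp
    show "\<forall>k<nA. {cA k, cA (Suc k)} \<in> F" unfolding cA_def nA_def
      using pE A ij by (auto intro!: pE)
    show "cA ` {0..nA} \<subseteq> V" unfolding cA_def nA_def using pV A ij by auto
    show "\<forall>k. 0 < k \<longrightarrow> k < nA \<longrightarrow> cA k \<notin> nth q ` {0..m}" unfolding cA_def nA_def
      using A(5) QS_def by auto
  qed
  define cB where "cB = (\<lambda>k. p!(i2+k1+k))"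
  define cB' where "cB' = (\<lambda>k. p!(i2+l1-k))"
  define nB where "nB = l1 - k1"
  have cB: "cB 0 = q!ga" "cB nB = q!de" "\<forall>k<nB. {cB k, cB (Suc k)} \<in> F"
     "cB ` {0..nB} \<subseteq> V" "\<forall>k. 0 < k \<longrightarrow> k < nB \<longrightarrow> cB k \<notin> nth q ` {0..m}"
  proof -
    show "cB 0 = q!ga" using ga cB_def by simp
    show "cB nB = q!de" using de B unfolding cB_def nB_def by simp
    show "\<forall>k<nB. {cB k, cB (Suc k)} \<in> F" unfolding cB_def nB_def
      using pE B l1n nlen by (auto intro!: pE)
    show "cB ` {0..nB} \<subseteq> V" unfolding cB_def nB_def using pV B l1n nlen by auto
    show "\<forall>k. 0 < k \<longrightarrow> k < nB \<longrightarrow> cB k \<notin> nth q ` {0..m}" unfolding cB_def nB_def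
    proof (intro allI impI)
      fix k assume "0 < k" "k < l1 - k1"
      then have "k1 < k1 + k" "k1 + k < l1" by auto
      then have "p!(i2 + (k1 + k)) \<notin> QS" using B(5) by blast
      then show "p!(i2+k1+k) \<notin> nth q ` {0..m}" unfolding QS_def by (simp add: add.assoc)
    qed
  qed
  have cB': "cB' 0 = q!de" "cB' nB = q!ga" "\<forall>k<nB. {cB' k, cB' (Suc k)} \<in> F"
     "cB' ` {0..nB} \<subseteq> V" "\<forall>k. 0 < k \<longrightarrow> k < nB \<longrightarrow> cB' k \<notin> nth q ` {0..m}"
  proof -
    have eq: "cB' k = cB (nB - k)" if "k \<le> nB" for k
    proof -
      have "i2 + l1 - k = i2 + k1 + (nB - k)" using that B(1) unfolding nB_def by arith
      then show ?thesis unfolding cB'_def cB_def by simp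
    qed
    show "cB' 0 = q!de" using eq[of 0] cB by simp
    show "cB' nB = q!ga" using eq[of nB] cB by simp
    show "\<forall>k<nB. {cB' k, cB' (Suc k)} \<in> F"
    proof (intro allI impI)
      fix k assume k: "k < nB"
      have "{cB (nB - Suc k), cB (Suc (nB - Suc k))} \<in> F" using cB(3) k by simp
      moreover have "Suc (nB - Suc k) = nB - k" using k by simp
      ultimately show "{cB' k, cB' (Suc k)} \<in> F" using eq[of k] eq[of "Suc k"] k by (simp add: insert_commute)
    qed
    show "cB' ` {0..nB} \<subseteq> V"
    proof
      fix x assume "x \<in> cB' ` {0..nB}"
      then obtain k where "k \<le> nB" "x = cB' k" by auto
      then have "x = cB (nB - k)" using eq by simp
      then show "x \<in> V" using cB(4) by auto
    qed
    show "\<forall>k. 0 < k \<longrightarrow> k < nB \<longrightarrow> cB' k \<notin> nth q ` {0..m}"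
    proof (intro allI impI)
      fix k assume k: "0 < k" "k < nB"
      then have "0 < nB - k" "nB - k < nB" by auto
      then have "cB (nB - k) \<notin> nth q ` {0..m}" using cB(5) by blast
      then show "cB' k \<notin> nth q ` {0..m}" using eq[of k] k by simp
    qed
  qed
  have disjAB: "cA ` {0..nA} \<inter> cB ` {0..nB} = {}"
  proof -
    { fix a b assume "a \<le> nA" "b \<le> nB" "cA a = cB b"
      then have "p!(k0+a) = p!(i2+k1+b)" unfolding cA_def cB_def by simp
      moreover have "k0 + a < length p" "i2+k1+b < length p" using \<open>a \<le> nA\<close> \<open>b \<le> nB\<close> A B l1n nlen ij
        unfolding nA_def nB_def by auto
      ultimately have "k0 + a = i2+k1+b" using pinj by blast
      then have False using \<open>a \<le> nA\<close> A ij unfolding nA_def by simp }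
    then show ?thesis by fastforce
  qed
  have disjAB': "cB' ` {0..nB} \<inter> cA ` {0..nA} = {}"
  proof -
    have "cB' ` {0..nB} \<subseteq> cB ` {0..nB}"
    proof
      fix x assume "x \<in> cB' ` {0..nB}"
      then obtain k where "k \<le> nB" "x = cB' k" by auto
      moreover have "i2 + l1 - k = i2 + k1 + (nB - k)" using \<open>k \<le> nB\<close> B(1) unfolding nB_def by arith
      ultimately have "x = cB (nB - k)" unfolding cB'_def cB_def by simp
      then show "x \<in> cB ` {0..nB}" by auto
    qed
    then show ?thesis using disjAB by blast
  qed
  show ?thesis
  proof (cases "de < al")
    case True
    show ?thesis unfolding F_def[symmetric]
      by (rule K4_from_chords[OF qV qinj qE qcyc _ _ _ _ cB' cA disjAB']) (use True ga al' in auto)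
  next
    case False
    then have "al' < de" "de \<le> m" using de by auto
    show ?thesis unfolding F_def[symmetric]
      by (rule K4_from_chords[OF qV qinj qE qcyc _ _ _ _ cA cB disjAB]) (use \<open>al' < de\<close> \<open>de \<le> m\<close> ga in auto)
  qed
qed



fun walk :: "'a set set \<Rightarrow> 'a list \<Rightarrow> bool" where
  "walk E [] = True"
| "walk E [x] = True"
| "walk E (x # y # xs) = ({x, y} \<in> E \<and> walk E (y # xs))"

lemma walk_iff: "walk E p \<longleftrightarrow> (\<forall>i. Suc i < length p \<longrightarrow> {p!i, p!Suc i} \<in> E)"
proof (induction E p rule: walk.induct)
  case (3 E x y xs)
  show ?case (is "?L \<longleftrightarrow> ?R")
  proof
    assume L: ?L
    show ?R
    proof (intro allI impI)
      fix i assume i: "Suc i < length (x # y # xs)"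
      show "{(x # y # xs) ! i, (x # y # xs) ! Suc i} \<in> E"
      proof (cases i)
        case 0 then show ?thesis using L by simp
      next
        case (Suc j) then show ?thesis using L 3 i by auto
      qed
    qed
  next
    assume R: ?R
    have "{x, y} \<in> E" using R[rule_format, of 0] by simp
    moreover have "\<forall>i. Suc i < length (y # xs) \<longrightarrow> {(y # xs) ! i, (y # xs) ! Suc i} \<in> E"
    proof (intro allI impI)
      fix i assume "Suc i < length (y # xs)"
      then show "{(y # xs) ! i, (y # xs) ! Suc i} \<in> E" using R[rule_format, of "Suc i"] by simp
    qed
    ultimately show ?L using 3 by simp
  qed
qed auto

lemma walk_Cons: "walk E (x # xs) \<longleftrightarrow> walk E xs \<and> (xs \<noteq> [] \<longrightarrow> {x, hd xs} \<in> E)"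
  by (cases xs) auto

lemma walk_append: "walk E (xs @ ys) \<longleftrightarrow> walk E xs \<and> walk E ys \<and> (xs \<noteq> [] \<longrightarrow> ys \<noteq> [] \<longrightarrow> {last xs, hd ys} \<in> E)"
  by (induction xs) (auto simp: walk_Cons)

lemma walk_rev: "walk E (rev xs) \<longleftrightarrow> walk E xs"
  by (induction xs) (auto simp: walk_append walk_Cons insert_commute last_rev)

lemma walk_join: "walk E (xs @ [a]) \<Longrightarrow> walk E (a # ys) \<Longrightarrow> walk E (xs @ a # ys)"
  by (auto simp: walk_append walk_Cons)

lemma walk_split: "walk E (xs @ a # ys) \<Longrightarrow> walk E (xs @ [a]) \<and> walk E (a # ys)"
  by (auto simp: walk_append walk_Cons)

lemma simple_path_walk: "simple_path V E p \<longleftrightarrow> p \<noteq> [] \<and> distinct p \<and> set p \<subseteq> V \<and> walk E p"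
  unfolding simple_path_def walk_iff by auto

definition stp :: "'a set \<Rightarrow> 'a set set \<Rightarrow> 'a \<Rightarrow> 'a \<Rightarrow> 'a list \<Rightarrow> bool" where
  "stp V E s t p \<longleftrightarrow> simple_path V E p \<and> hd p = s \<and> last p = t"

lemma first_hit:
  assumes "(v, w) \<in> (adj_in E S)\<^sup>*" "w \<in> T" "v \<in> S"
  shows "\<exists>R. R \<noteq> [] \<and> hd R = v \<and> last R \<in> T \<and> set R \<subseteq> S \<and> distinct R \<and> walk E R \<and>
             (\<forall>x\<in>set (butlast R). x \<notin> T)"
  using assms(1,3)
proof (induction rule: converse_rtrancl_induct)
  case base
  then show ?case using assms(2) by (intro exI[of _ "[w]"]) auto
next
  case (step v v')
  have vS: "v \<in> S" "v' \<in> S" and vE: "{v, v'} \<in> E" using step(1) unfolding adj_in_def by auto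
  obtain R where R: "R \<noteq> []" "hd R = v'" "last R \<in> T" "set R \<subseteq> S" "distinct R" "walk E R"
    "\<forall>x\<in>set (butlast R). x \<notin> T" using step(3) vS by blast
  show ?case
  proof (cases "v \<in> T")
    case True then show ?thesis using vS by (intro exI[of _ "[v]"]) auto
  next
    case vT: False
    show ?thesis
    proof (cases "v \<in> set R")
      case True
      then obtain A B where AB: "R = A @ v # B" by (meson split_list)
      have "walk E (v # B)" using R(6) AB walk_split by metis
      moreover have "last (v # B) = last R" using AB by simp
      moreover have "butlast (v # B) = butlast R \<or> set (butlast (v # B)) \<subseteq> set (butlast R)"
        using AB by (auto simp: butlast_append)
      ultimately show ?thesis using R AB vT
        by (intro exI[of _ "v # B"]) (auto simp: butlast_append)
    next
      case False
      have "walk E (v # R)" using R(1,2,6) vE by (simp add: walk_Cons)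
      moreover have "butlast (v # R) = v # butlast R" using R(1) by simp
      ultimately show ?thesis using R vS vT False
        by (intro exI[of _ "v # R"]) auto
    qed
  qed
qed

lemma splice:
  assumes "stp V E s t (A @ x # B @ y # C)" "walk E (x # R @ [y])" "distinct R" "set R \<subseteq> V"
    "set R \<inter> set (A @ x # B @ y # C) = {}"
  shows "stp V E s t (A @ x # R @ y # C)"
proof -
  let ?p = "A @ x # B @ y # C"
  have p: "distinct ?p" "set ?p \<subseteq> V" "walk E ?p" "hd ?p = s" "last ?p = t"
    using assms(1) unfolding stp_def simple_path_walk by auto
  have w1: "walk E (A @ [x])" using walk_split[OF p(3)] by blast
  have "walk E ((A @ x # B) @ y # C)" using p(3) by simp
  then have w2: "walk E (y # C)" using walk_split[of E "A @ x # B" y C] by blast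
  have "walk E (x # R @ y # C)" using walk_join[OF assms(2)[unfolded append_Cons[symmetric]] w2] by simp
  then have "walk E (A @ x # R @ y # C)" using walk_join[OF w1] by blast
  moreover have "distinct (A @ x # R @ y # C)" using p(1) assms(3,5) by auto
  moreover have "set (A @ x # R @ y # C) \<subseteq> V" using p(2) assms(4) by auto
  moreover have "hd (A @ x # R @ y # C) = s" using p(4) by (cases A) auto
  moreover have "last (A @ x # R @ y # C) = t" using p(5) by simp
  ultimately show ?thesis unfolding stp_def simple_path_walk by simp
qed



lemma cover_step:
  assumes P: "stp V E s t p" and u: "u \<in> set p" and uv: "{u, v} \<in> E" "u \<noteq> v" and vV: "v \<in> V"
    and conn: "connected_set E (V - {u})" and st: "s \<noteq> t"
  shows "\<exists>A B. stp V E s t (A @ u # v # B) \<or> stp V E s t (A @ v # u # B)"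
proof -
  have p: "p \<noteq> []" "distinct p" "set p \<subseteq> V" "walk E p" "hd p = s" "last p = t"
    using P unfolding stp_def simple_path_walk by auto
  obtain A0 B0 where pAB: "p = A0 @ u # B0" using u by (meson split_list)
  have wuv: "walk E (u # [] @ [v])" "walk E (v # [] @ [u])" using uv by (auto simp: insert_commute)
  show ?thesis
  proof (cases "v \<in> set p")
    case True
    then have "v \<in> set A0 \<or> v \<in> set B0" using pAB uv by auto
    then show ?thesis
    proof
      assume "v \<in> set A0"
      then obtain A1 C where "A0 = A1 @ v # C" by (meson split_list)
      then have "stp V E s t (A1 @ v # C @ u # B0)" using P pAB by simp
      from splice[OF this wuv(2)] have "stp V E s t (A1 @ v # u # B0)" by simp
      then show ?thesis by blast
    next
      assume "v \<in> set B0"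
      then obtain C B1 where "B0 = C @ v # B1" by (meson split_list)
      then have "stp V E s t (A0 @ u # C @ v # B1)" using P pAB by simp
      from splice[OF this wuv(1)] have "stp V E s t (A0 @ u # v # B1)" by simp
      then show ?thesis by blast
    qed
  next
    case vnot: False
    define w where "w = (if u = s then t else s)"
    have wp: "w \<in> set p" "w \<noteq> u" unfolding w_def using p st
      by (auto simp: hd_in_set last_in_set dest: sym[of s] intro: hd_in_set last_in_set)
    have "(v, w) \<in> (adj_in E (V - {u}))\<^sup>*"
      using conn vV uv wp p unfolding connected_set_def by auto
    from first_hit[OF this, of "set p - {u}"] wp vV uv
    obtain R where R: "R \<noteq> []" "hd R = v" "last R \<in> set p - {u}" "set R \<subseteq> V - {u}" "distinct R" "walk E R"
      "\<forall>x\<in>set (butlast R). x \<notin> set p - {u}" by auto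
    define z where "z = last R"
    have Rz: "R = butlast R @ [z]" unfolding z_def using R(1) by simp
    have bl: "butlast R \<noteq> []"
    proof
      assume "butlast R = []" then have "R = [z]" using Rz by simp
      then have "v = z" using R(2) by simp
      then show False using vnot R(3) z_def by simp
    qed
    then obtain X where X: "butlast R = v # X" using R(2) Rz by (cases "butlast R") auto
    have blp: "set (butlast R) \<inter> set p = {}"
    proof -
      have "set (butlast R) \<subseteq> set R" by (meson in_set_butlastD subsetI)
      then show ?thesis using R(4,7) by auto
    qed
    have bld: "distinct (butlast R)" using R(5) by (simp add: distinct_butlast)
    have blV: "set (butlast R) \<subseteq> V" using R(4) by (meson Diff_subset in_set_butlastD subset_iff)
    have wuR: "walk E (u # butlast R @ [z])" using Rz R(6) uv X by (metis walk_Cons list.sel(1) list.simps(3) append_Cons)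
    have zp: "z \<in> set p" "z \<noteq> u" using R(3) z_def by auto
    then have "z \<in> set A0 \<or> z \<in> set B0" using pAB by auto
    then show ?thesis
    proof
      assume "z \<in> set B0"
      then obtain C B1 where CB: "B0 = C @ z # B1" by (meson split_list)
      then have "stp V E s t (A0 @ u # C @ z # B1)" using P pAB by simp
      from splice[OF this wuR bld blV] blp pAB CB
      have "stp V E s t (A0 @ u # butlast R @ z # B1)" by simp
      then have "stp V E s t (A0 @ u # v # (X @ z # B1))" using X by simp
      then show ?thesis by blast
    next
      assume "z \<in> set A0"
      then obtain A1 C where AC: "A0 = A1 @ z # C" by (meson split_list)
      then have "stp V E s t (A1 @ z # C @ u # B0)" using P pAB by simp
      moreover have "walk E (z # rev (butlast R) @ [u])"
        using wuR walk_rev[of E "u # butlast R @ [z]"] by simp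
      ultimately have "stp V E s t (A1 @ z # rev (butlast R) @ u # B0)"
        using splice[of V E s t A1 z C u B0 "rev (butlast R)"] bld blV blp pAB AC by auto
      then have "stp V E s t ((A1 @ z # rev X) @ v # u # B0)" using X by simp
      then show ?thesis by blast
    qed
  qed
qed



fun dwalk :: "('a \<times> 'a) set \<Rightarrow> 'a list \<Rightarrow> bool" where
  "dwalk R [] = True"
| "dwalk R [x] = True"
| "dwalk R (x # y # xs) = ((x, y) \<in> R \<and> dwalk R (y # xs))"

lemma dwalk_iff: "dwalk R p \<longleftrightarrow> (\<forall>i. Suc i < length p \<longrightarrow> (p!i, p!Suc i) \<in> R)"
proof (induction R p rule: dwalk.induct)
  case (3 R x y xs)
  show ?case (is "?L \<longleftrightarrow> ?R")
  proof
    assume L: ?L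
    show ?R
    proof (intro allI impI)
      fix i assume i: "Suc i < length (x # y # xs)"
      show "((x # y # xs) ! i, (x # y # xs) ! Suc i) \<in> R"
      proof (cases i)
        case 0 then show ?thesis using L by simp
      next
        case (Suc j) then show ?thesis using L 3 i by auto
      qed
    qed
  next
    assume RR: ?R
    have "(x, y) \<in> R" using RR[rule_format, of 0] by simp
    moreover have "\<forall>i. Suc i < length (y # xs) \<longrightarrow> ((y # xs) ! i, (y # xs) ! Suc i) \<in> R"
    proof (intro allI impI)
      fix i assume "Suc i < length (y # xs)"
      then show "((y # xs) ! i, (y # xs) ! Suc i) \<in> R" using RR[rule_format, of "Suc i"] by simp
    qed
    ultimately show ?L using 3 by simp
  qed
qed auto

lemma dwalk_Cons: "dwalk R (x # xs) \<longleftrightarrow> dwalk R xs \<and> (xs \<noteq> [] \<longrightarrow> (x, hd xs) \<in> R)"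
  by (cases xs) auto

lemma dwalk_append: "dwalk R (xs @ ys) \<longleftrightarrow> dwalk R xs \<and> dwalk R ys \<and> (xs \<noteq> [] \<longrightarrow> ys \<noteq> [] \<longrightarrow> (last xs, hd ys) \<in> R)"
  by (induction xs) (auto simp: dwalk_Cons)

lemma dwalk_rev: "dwalk R (rev xs) \<longleftrightarrow> dwalk (R\<inverse>) xs"
  by (induction xs) (auto simp: dwalk_append dwalk_Cons last_rev)

lemma dwalk_walk: "(\<forall>(x, y)\<in>R. {x, y} \<in> E) \<Longrightarrow> dwalk R p \<Longrightarrow> walk E p"
  by (induction R p rule: dwalk.induct) auto

lemma dwalk_reach0:
  "dwalk R p \<Longrightarrow> x \<in> set p \<Longrightarrow> (hd p, x) \<in> R\<^sup>* \<and> (x, last p) \<in> R\<^sup>*"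
proof (induction R p arbitrary: x rule: dwalk.induct)
  case (3 R a b xs)
  have ab: "(a, b) \<in> R" "dwalk R (b # xs)" using 3(2) by auto
  have bl: "(b, last (b # xs)) \<in> R\<^sup>*" using 3(1)[OF ab(2), of b] by simp
  show ?case
  proof (cases "x = a")
    case True then show ?thesis using ab bl by (auto intro: converse_rtrancl_into_rtrancl)
  next
    case False
    then have "x \<in> set (b # xs)" using 3(3) by simp
    then have "(b, x) \<in> R\<^sup>* \<and> (x, last (b # xs)) \<in> R\<^sup>*" using 3(1)[OF ab(2)] by simp
    then show ?thesis using ab by (auto intro: converse_rtrancl_into_rtrancl)
  qed
qed auto

lemma dwalk_reach:
  assumes "dwalk R p" "x \<in> set p"
  shows "(hd p, x) \<in> R\<^sup>*" "(x, last p) \<in> R\<^sup>*"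
  using dwalk_reach0[OF assms] by auto

lemma dir_path_dwalk: "dir_path V D p \<longleftrightarrow> p \<noteq> [] \<and> distinct p \<and> set p \<subseteq> V \<and> dwalk D p"
  unfolding dir_path_def dwalk_iff by auto

lemma fwd_path:
  assumes fin: "finite R" and acyc: "acyclic R" and RW: "R \<subseteq> W \<times> W"
    and sink: "\<forall>x\<in>W. (\<forall>y. (x, y) \<notin> R) \<longrightarrow> x = t"
  shows "v \<in> W \<Longrightarrow> \<exists>b. dwalk R (v # b) \<and> distinct (v # b) \<and> set (v # b) \<subseteq> W \<and> last (v # b) = t
           \<and> (\<forall>x\<in>set b. (v, x) \<in> R\<^sup>+)"
proof (induction v rule: wf_induct[OF finite_acyclic_wf_converse[OF fin acyc]])
  case (1 v)
  show ?case
  proof (cases "\<exists>y. (v, y) \<in> R")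
    case False
    then have "v = t" using sink 1(2) by blast
    then show ?thesis using 1(2) by (intro exI[of _ "[]"]) auto
  next
    case True
    then obtain y where vy: "(v, y) \<in> R" by blast
    then have yW: "y \<in> W" using RW by auto
    obtain b where b: "dwalk R (y # b)" "distinct (y # b)" "set (y # b) \<subseteq> W" "last (y # b) = t"
      "\<forall>x\<in>set b. (y, x) \<in> R\<^sup>+" using 1(1) vy yW by blast
    have vny: "v \<noteq> y" using vy acyc unfolding acyclic_def by auto
    have vnb: "v \<notin> set b"
    proof
      assume "v \<in> set b" then have "(y, v) \<in> R\<^sup>+" using b(5) by auto
      then have "(v, v) \<in> R\<^sup>+" using vy by (meson trancl_into_trancl2)
      then show False using acyc unfolding acyclic_def by auto
    qed
    have "\<forall>x\<in>set (y # b). (v, x) \<in> R\<^sup>+" using b(5) vy by (auto intro: trancl_into_trancl2)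
    then show ?thesis using b vy vny vnb 1(2) by (intro exI[of _ "y # b"]) auto
  qed
qed



lemma graph_edge: "graph V E \<Longrightarrow> {x, y} \<in> E \<Longrightarrow> x \<noteq> y \<and> x \<in> V \<and> y \<in> V"
proof -
  assume g: "graph V E" and e: "{x, y} \<in> E"
  then obtain u v where uv: "{x, y} = {u, v}" "u \<noteq> v" "u \<in> V" "v \<in> V"
    unfolding graph_def by blast
  have "x \<in> {u, v}" "y \<in> {u, v}" using uv(1) by (metis insertI1, metis insertI1 insert_commute)
  moreover have "x \<noteq> y"
  proof
    assume "x = y" then have "{u, v} = {x}" using uv(1) by simp
    then have "u \<in> {x}" "v \<in> {x}" by (metis insertI1, metis insertI1 insert_commute)
    then show False using uv(2) by simp
  qed
  ultimately show ?thesis using uv by auto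
qed

lemma bip_extend:
  assumes gr: "graph V E" and ori: "orientation E D" and acyc: "acyclic D"
    and src: "{v\<in>V. is_source D v} = {s}" and snk: "{v\<in>V. is_sink D v} = {t}"
    and p: "dir_path V D p"
  shows "\<exists>a b. dir_path V D (a @ p @ b) \<and> hd (a @ p @ b) = s \<and> last (a @ p @ b) = t"
proof -
  have DV: "D \<subseteq> V \<times> V"
  proof
    fix z assume "z \<in> D"
    then obtain x y where "z = (x, y)" "(x, y) \<in> D" by (cases z) auto
    then have "{x, y} \<in> E" using ori unfolding orientation_def by auto
    then show "z \<in> V \<times> V" using graph_edge[OF gr] \<open>z = (x, y)\<close> by auto
  qed
  have finV: "finite V" using gr unfolding graph_def by auto
  have fin: "finite D" using DV finV by (meson finite_SigmaI finite_subset)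
  have DV': "D\<inverse> \<subseteq> V \<times> V" using DV by auto
  have sinkc: "\<forall>x\<in>V. (\<forall>y. (x, y) \<notin> D) \<longrightarrow> x = t" using snk unfolding is_sink_def by auto
  have srcc: "\<forall>x\<in>V. (\<forall>y. (x, y) \<notin> D\<inverse>) \<longrightarrow> x = s" using src unfolding is_source_def by auto
  have pp: "p \<noteq> []" "distinct p" "set p \<subseteq> V" "dwalk D p" using p unfolding dir_path_dwalk by auto
  have lpV: "last p \<in> V" "hd p \<in> V" using pp by auto
  obtain b where b: "dwalk D (last p # b)" "distinct (last p # b)" "set (last p # b) \<subseteq> V"
      "last (last p # b) = t" "\<forall>x\<in>set b. (last p, x) \<in> D\<^sup>+"
    using fwd_path[OF fin acyc DV sinkc lpV(1)] by blast
  obtain c where c: "dwalk (D\<inverse>) (hd p # c)" "distinct (hd p # c)" "set (hd p # c) \<subseteq> V"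
      "last (hd p # c) = s" "\<forall>x\<in>set c. (hd p, x) \<in> (D\<inverse>)\<^sup>+"
    using fwd_path[OF finite_converse[THEN iffD2, OF fin] acyclic_converse[THEN iffD2, OF acyc] DV' srcc lpV(2)] by blast
  have c': "\<forall>x\<in>set c. (x, hd p) \<in> D\<^sup>+" using c(5) by (simp add: trancl_converse)
  have irr: "(x, x) \<notin> D\<^sup>+" for x using acyc unfolding acyclic_def by auto
  have cp: "set c \<inter> set p = {}"
  proof (rule ccontr)
    assume "set c \<inter> set p \<noteq> {}" then obtain x where x: "x \<in> set c" "x \<in> set p" by auto
    have "(x, hd p) \<in> D\<^sup>+" using c' x by auto
    moreover have "(hd p, x) \<in> D\<^sup>*" using dwalk_reach[OF pp(4) x(2)] by simp
    ultimately show False using irr by (meson trancl_rtrancl_trancl)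
  qed
  have pb: "set p \<inter> set b = {}"
  proof (rule ccontr)
    assume "set p \<inter> set b \<noteq> {}" then obtain x where x: "x \<in> set p" "x \<in> set b" by auto
    have "(last p, x) \<in> D\<^sup>+" using b(5) x by auto
    moreover have "(x, last p) \<in> D\<^sup>*" using dwalk_reach[OF pp(4) x(1)] by simp
    ultimately show False using irr by (meson rtrancl_trancl_trancl)
  qed
  have cb: "set c \<inter> set b = {}"
  proof (rule ccontr)
    assume "set c \<inter> set b \<noteq> {}" then obtain x where x: "x \<in> set c" "x \<in> set b" by auto
    have "(x, hd p) \<in> D\<^sup>+" using c' x by auto
    moreover have "(hd p, last p) \<in> D\<^sup>*" using dwalk_reach[OF pp(4)] pp(1) by (simp add: last_in_set)
    moreover have "(last p, x) \<in> D\<^sup>+" using b(5) x by auto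
    ultimately show False using irr by (meson trancl_rtrancl_trancl trancl_trans)
  qed
  have w1: "dwalk D (rev c @ [hd p])" using c(1) dwalk_rev[of D "hd p # c"] by simp
  have w2: "dwalk D (rev c @ p)"
  proof -
    have "p = hd p # tl p" using pp(1) by simp
    then have "dwalk D (hd p # tl p)" using pp(4) by simp
    then have "dwalk D (rev c @ hd p # tl p)" using w1 by (auto simp: dwalk_append dwalk_Cons)
    then show ?thesis using \<open>p = hd p # tl p\<close> by metis
  qed
  have w3: "dwalk D (rev c @ p @ b)"
    using w2 b(1) pp(1) by (auto simp: dwalk_append dwalk_Cons)
  have dist: "distinct (rev c @ p @ b)" using c(2) b(2) pp(2) cp pb cb by auto
  have sub: "set (rev c @ p @ b) \<subseteq> V" using c(3) b(3) pp(3) by auto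
  have h: "hd (rev c @ p @ b) = s"
  proof (cases "c = []")
    case True then show ?thesis using c(4) pp(1) by simp
  next
    case False then show ?thesis using c(4) by (simp add: hd_rev)
  qed
  have l: "last (rev c @ p @ b) = t"
  proof (cases "b = []")
    case True then show ?thesis using b(4) pp(1) by simp
  next
    case False then show ?thesis using b(4) by simp
  qed
  show ?thesis using w3 dist sub h l pp(1) unfolding dir_path_dwalk by blast
qed



lemma glue:
  assumes "stp V E s t (P1 @ y # Q1)" "stp V E s t (P2 @ y # Q2)" "set P1 \<inter> set Q2 = {}"
  shows "stp V E s t (P1 @ y # Q2)"
proof -
  have a: "distinct (P1 @ y # Q1)" "set (P1 @ y # Q1) \<subseteq> V" "walk E (P1 @ y # Q1)" "hd (P1 @ y # Q1) = s"
    using assms(1) unfolding stp_def simple_path_walk by auto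
  have b: "distinct (P2 @ y # Q2)" "set (P2 @ y # Q2) \<subseteq> V" "walk E (P2 @ y # Q2)" "last (P2 @ y # Q2) = t"
    using assms(2) unfolding stp_def simple_path_walk by auto
  have "walk E (P1 @ [y])" using walk_split[OF a(3)] by simp
  moreover have "walk E (y # Q2)" using walk_split[OF b(3)] by simp
  ultimately have "walk E (P1 @ y # Q2)" by (rule walk_join)
  moreover have "distinct (P1 @ y # Q2)" using a(1) b(1) assms(3) by auto
  moreover have "set (P1 @ y # Q2) \<subseteq> V" using a(2) b(2) by auto
  moreover have "hd (P1 @ y # Q2) = s" using a(4) by (cases P1) auto
  moreover have "last (P1 @ y # Q2) = t" using b(4) by simp
  ultimately show ?thesis unfolding stp_def simple_path_walk by simp
qed

lemma consec: "Suc i < length p \<Longrightarrow> p = take i p @ p!i # p!Suc i # drop (Suc (Suc i)) p"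
  by (metis Cons_nth_drop_Suc Suc_lessD append_take_drop_id)

theorem lemma2p5:
  fixes V :: "'a set" and E :: "'a set set" and s t :: 'a
  assumes "graph V E" and "two_connected V E" and "\<not> has_K4_minor V E"
    and "split_pair V E s t"
  shows "(\<exists>!D. orientation E D \<and> acyclic D \<and>
              {v\<in>V. is_source D v} = {s} \<and> {v\<in>V. is_sink D v} = {t})
       \<and> (\<forall>D. orientation E D \<and> acyclic D \<and>
              {v\<in>V. is_source D v} = {s} \<and> {v\<in>V. is_sink D v} = {t} \<longrightarrow>
            (\<forall>p. simple_path V E p \<and> hd p = s \<and> last p = t \<longrightarrow> dir_path V D p) \<and>
            (\<forall>p. dir_path V D p \<longrightarrow>
               (\<exists>a b. dir_path V D (a @ p @ b) \<and> hd (a @ p @ b) = s \<and> last (a @ p @ b) = t)))"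
proof -
  have gr: "graph V E" by fact
  have conn: "connected_set E V" and conn2: "\<forall>x\<in>V. connected_set E (V - {x})"
    using assms(2) unfolding two_connected_def by auto
  have sV: "s \<in> V" and tV: "t \<in> V" and st: "s \<noteq> t" and noK: "\<not> has_K4_minor V (insert {s, t} E)"
    using assms(4) unfolding split_pair_def by auto
  have edge: "\<And>x y. {x, y} \<in> E \<Longrightarrow> x \<noteq> y \<and> x \<in> V \<and> y \<in> V" using graph_edge[OF gr] by blast
  let ?stp = "stp V E s t"
  define D where "D = {(a, b). \<exists>A B. ?stp (A @ a # b # B)}"
  have ex_stp: "\<exists>p. ?stp p"
  proof -
    have "(s, t) \<in> (adj_in E V)\<^sup>*" using conn sV tV unfolding connected_set_def by auto
    from first_hit[OF this, of "{t}"] sV obtain R where R: "R \<noteq> []" "hd R = s" "last R \<in> {t}"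
      "set R \<subseteq> V" "distinct R" "walk E R" by auto
    then have "?stp R" unfolding stp_def simple_path_walk by auto
    then show ?thesis by blast
  qed
  have on_stp: "\<exists>p. ?stp p \<and> w \<in> set p" if "w \<in> V" for w
  proof -
    have "(s, w) \<in> (adj_in E V)\<^sup>*" using conn sV that unfolding connected_set_def by auto
    then show ?thesis
    proof (induction rule: rtrancl_induct)
      case base
      obtain p where "?stp p" using ex_stp by blast
      moreover then have "s \<in> set p" unfolding stp_def simple_path_def by (metis hd_in_set)
      ultimately show ?case by blast
    next
      case (step y z)
      obtain p where p: "?stp p" "y \<in> set p" using step(3) by blast
      have yz: "{y, z} \<in> E" "y \<in> V" "z \<in> V" using step(2) unfolding adj_in_def by auto
      obtain A B where "?stp (A @ y # z # B) \<or> ?stp (A @ z # y # B)"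
        using cover_step[OF p(1) p(2) yz(1) _ yz(3) _ st] edge[OF yz(1)] conn2 yz(2) by blast
      then show ?case by (metis in_set_conv_decomp list.set_intros(1) list.set_intros(2) set_append Un_iff)
    qed
  qed
  have covered: "(u, v) \<in> D \<or> (v, u) \<in> D" if e: "{u, v} \<in> E" for u v
  proof -
    have uV: "u \<in> V" "u \<noteq> v" "v \<in> V" using edge[OF e] by auto
    obtain p where p: "?stp p" "u \<in> set p" using on_stp[OF uV(1)] by blast
    obtain A B where "?stp (A @ u # v # B) \<or> ?stp (A @ v # u # B)"
      using cover_step[OF p(1) p(2) e uV(2) uV(3) _ st] conn2 uV(1) by blast
    then show ?thesis unfolding D_def by blast
  qed
  have noswap: "False" if "?stp (A @ a # B @ b # C)" "?stp (A' @ b # B' @ a # C')" for A a B b C A' B' C'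
  proof -
    have "has_K4_minor V (insert {s, t} E)"
    proof (rule cons_K4[of V E "A @ a # B @ b # C" s t "A' @ b # B' @ a # C'" "length A" "length A + Suc (length B)"
          "length A'" "length A' + Suc (length B')"])
      show "simple_path V E (A @ a # B @ b # C)" "hd (A @ a # B @ b # C) = s" "last (A @ a # B @ b # C) = t"
        using that(1) unfolding stp_def by auto
      show "simple_path V E (A' @ b # B' @ a # C')" "hd (A' @ b # B' @ a # C') = s" "last (A' @ b # B' @ a # C') = t"
        using that(2) unfolding stp_def by auto
    qed (auto simp: nth_append)
    then show False using noK by simp
  qed
  have orient: "orientation E D"
    unfolding orientation_def
  proof (intro conjI allI impI)
    show "\<forall>(u, v)\<in>D. {u, v} \<in> E"
    proof (clarify)
      fix u v assume "(u, v) \<in> D"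
      then obtain A B where "?stp (A @ u # v # B)" unfolding D_def by auto
      then have "walk E (A @ u # v # B)" unfolding stp_def simple_path_walk by auto
      then have "walk E (u # v # B)" using walk_split[of E A u "v # B"] by blast
      then show "{u, v} \<in> E" by simp
    qed
    fix u v assume e: "{u, v} \<in> E"
    show "(u, v) \<in> D \<longleftrightarrow> (v, u) \<notin> D"
    proof
      assume "(u, v) \<in> D"
      then obtain A B where 1: "?stp (A @ u # [] @ v # B)" unfolding D_def by auto
      show "(v, u) \<notin> D"
      proof
        assume "(v, u) \<in> D"
        then obtain A' B' where 2: "?stp (A' @ v # [] @ u # B')" unfolding D_def by auto
        show False using noswap[OF 1 2] .
      qed
    next
      assume "(v, u) \<notin> D" then show "(u, v) \<in> D" using covered[OF e] by blast
    qed
  qed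
  define Lt where "Lt = {(a, b). \<exists>A B C. ?stp (A @ a # B @ b # C)}"
  have DLt: "D \<subseteq> Lt"
  proof clarify
    fix a b assume "(a, b) \<in> D"
    then obtain A B where "?stp (A @ a # [] @ b # B)" unfolding D_def by auto
    then show "(a, b) \<in> Lt" unfolding Lt_def by blast
  qed
  have transLt: "trans Lt"
  proof (rule transI)
    fix x y z assume "(x, y) \<in> Lt" "(y, z) \<in> Lt"
    then obtain A1 B1 C1 A2 B2 C2 where 1: "?stp (A1 @ x # B1 @ y # C1)" and 2: "?stp (A2 @ y # B2 @ z # C2)"
      unfolding Lt_def by auto
    have h1: "?stp ((A1 @ x # B1) @ y # C1)" using 1 by simp
    have dis: "set (A1 @ x # B1) \<inter> set (B2 @ z # C2) = {}"
    proof (rule ccontr)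
      assume "set (A1 @ x # B1) \<inter> set (B2 @ z # C2) \<noteq> {}"
      then obtain w where w: "w \<in> set (A1 @ x # B1)" "w \<in> set (B2 @ z # C2)" by auto
      obtain X Y where XY: "A1 @ x # B1 = X @ w # Y" using w(1) by (meson split_list)
      obtain X' Y' where XY': "B2 @ z # C2 = X' @ w # Y'" using w(2) by (meson split_list)
      have "?stp (X @ w # Y @ y # C1)" using h1 XY by simp
      moreover have "?stp (A2 @ y # X' @ w # Y')" using 2 XY' by simp
      ultimately show False by (rule noswap)
    qed
    have "?stp ((A1 @ x # B1) @ y # (B2 @ z # C2))" by (rule glue[OF h1 2 dis])
    then have "?stp (A1 @ x # (B1 @ y # B2) @ z # C2)" by simp
    then show "(x, z) \<in> Lt" unfolding Lt_def by blast
  qed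
  have irrLt: "(x, x) \<notin> Lt" for x
  proof
    assume "(x, x) \<in> Lt"
    then obtain A B C where "?stp (A @ x # B @ x # C)" unfolding Lt_def by auto
    then show False unfolding stp_def simple_path_def by auto
  qed
  have acyc: "acyclic D"
  proof -
    have "D\<^sup>+ \<subseteq> Lt" using DLt transLt by (metis trancl_id trancl_mono subsetI)
    then show ?thesis unfolding acyclic_def using irrLt by blast
  qed
  have srcD: "{v\<in>V. is_source D v} = {s}"
  proof
    show "{s} \<subseteq> {v\<in>V. is_source D v}"
    proof -
      have "(u, s) \<notin> D" for u
      proof
        assume "(u, s) \<in> D"
        then obtain A B where 1: "?stp (A @ u # s # B)" unfolding D_def by auto
        then have d: "distinct (A @ u # s # B)" "hd (A @ u # s # B) = s" unfolding stp_def simple_path_def by auto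
        show False
        proof (cases A)
          case Nil then show ?thesis using d by auto
        next
          case (Cons a A') then show ?thesis using d by auto
        qed
      qed
      then show ?thesis using sV unfolding is_source_def by auto
    qed
    show "{v\<in>V. is_source D v} \<subseteq> {s}"
    proof clarify
      fix v assume v: "v \<in> V" "is_source D v"
      obtain p where p: "?stp p" "v \<in> set p" using on_stp[OF v(1)] by blast
      obtain A B where AB: "p = A @ v # B" using p(2) by (meson split_list)
      show "v = s"
      proof (cases A rule: rev_cases)
        case Nil then show ?thesis using p(1) AB unfolding stp_def by simp
      next
        case (snoc A' u)
        then have "?stp (A' @ u # v # B)" using p(1) AB by simp
        then have "(u, v) \<in> D" unfolding D_def by blast
        then show ?thesis using v(2) unfolding is_source_def by blast
      qed
    qed
  qed
  have snkD: "{v\<in>V. is_sink D v} = {t}"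
  proof
    show "{t} \<subseteq> {v\<in>V. is_sink D v}"
    proof -
      have "(t, u) \<notin> D" for u
      proof
        assume "(t, u) \<in> D"
        then obtain A B where 1: "?stp (A @ t # u # B)" unfolding D_def by auto
        then have d: "distinct (A @ t # u # B)" "last (A @ t # u # B) = t" unfolding stp_def simple_path_def by auto
        show False
        proof (cases B rule: rev_cases)
          case Nil then show ?thesis using d by auto
        next
          case (snoc B' b) then show ?thesis using d by auto
        qed
      qed
      then show ?thesis using tV unfolding is_sink_def by auto
    qed
    show "{v\<in>V. is_sink D v} \<subseteq> {t}"
    proof clarify
      fix v assume v: "v \<in> V" "is_sink D v"
      obtain p where p: "?stp p" "v \<in> set p" using on_stp[OF v(1)] by blast
      obtain A B where AB: "p = A @ v # B" using p(2) by (meson split_list)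
      show "v = t"
      proof (cases B)
        case Nil then show ?thesis using p(1) AB unfolding stp_def by simp
      next
        case (Cons w B')
        then have "?stp (A @ v # w # B')" using p(1) AB by simp
        then have "(v, w) \<in> D" unfolding D_def by blast
        then show ?thesis using v(2) unfolding is_sink_def by blast
      qed
    qed
  qed
  have uniq: "D' = D" if bip: "orientation E D'" "acyclic D'" "{v\<in>V. is_source D' v} = {s}"
      "{v\<in>V. is_sink D' v} = {t}" for D'
  proof -
    have sub: "D' \<subseteq> D"
    proof clarify
      fix a b assume ab: "(a, b) \<in> D'"
      then have e: "{a, b} \<in> E" using bip(1) unfolding orientation_def by auto
      have "dir_path V D' [a, b]" using edge[OF e] ab unfolding dir_path_dwalk by auto
      from bip_extend[OF gr bip this] obtain A B where
        AB: "dir_path V D' (A @ [a, b] @ B)" "hd (A @ [a, b] @ B) = s" "last (A @ [a, b] @ B) = t" by blast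
      have DE: "\<forall>(x, y)\<in>D'. {x, y} \<in> E" using bip(1) unfolding orientation_def by auto
      have "?stp (A @ a # b # B)" using AB dwalk_walk[OF DE] unfolding stp_def simple_path_walk dir_path_dwalk by auto
      then show "(a, b) \<in> D" unfolding D_def by blast
    qed
    have "D \<subseteq> D'"
    proof clarify
      fix a b assume ab: "(a, b) \<in> D"
      then have e: "{a, b} \<in> E" using orient unfolding orientation_def by auto
      show "(a, b) \<in> D'"
      proof (rule ccontr)
        assume "(a, b) \<notin> D'"
        then have "(b, a) \<in> D'" using bip(1) e unfolding orientation_def by blast
        then have "(b, a) \<in> D" using sub by auto
        then show False using ab orient e unfolding orientation_def by blast
      qed
    qed
    then show ?thesis using sub by auto
  qed
  have part1: "\<exists>!D. orientation E D \<and> acyclic D \<and> {v\<in>V. is_source D v} = {s} \<and> {v\<in>V. is_sink D v} = {t}"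
  proof (rule ex1I[where a=D])
    show "orientation E D \<and> acyclic D \<and> {v\<in>V. is_source D v} = {s} \<and> {v\<in>V. is_sink D v} = {t}"
      using orient acyc srcD snkD by (intro conjI)
    fix D' assume h: "orientation E D' \<and> acyclic D' \<and> {v\<in>V. is_source D' v} = {s} \<and> {v\<in>V. is_sink D' v} = {t}"
    show "D' = D" by (rule uniq) (use h in auto)
  qed
  have part2: "(\<forall>p. simple_path V E p \<and> hd p = s \<and> last p = t \<longrightarrow> dir_path V D' p) \<and>
            (\<forall>p. dir_path V D' p \<longrightarrow>
               (\<exists>a b. dir_path V D' (a @ p @ b) \<and> hd (a @ p @ b) = s \<and> last (a @ p @ b) = t))"
    if bip: "orientation E D'" "acyclic D'" "{v\<in>V. is_source D' v} = {s}" "{v\<in>V. is_sink D' v} = {t}" for D'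
  proof (intro conjI allI impI)
    fix p assume p: "simple_path V E p \<and> hd p = s \<and> last p = t"
    have "D' = D" using uniq[OF bip] .
    have "\<forall>i. Suc i < length p \<longrightarrow> (p!i, p!Suc i) \<in> D"
    proof (intro allI impI)
      fix i assume i: "Suc i < length p"
      have "?stp p" using p unfolding stp_def by auto
      then have "?stp (take i p @ p!i # p!Suc i # drop (Suc (Suc i)) p)" using consec[OF i] by simp
      then show "(p!i, p!Suc i) \<in> D" unfolding D_def by blast
    qed
    then show "dir_path V D' p" using p \<open>D' = D\<close> unfolding dir_path_def simple_path_def by auto
  next
    fix p assume "dir_path V D' p"
    from bip_extend[OF gr bip this]
    show "\<exists>a b. dir_path V D' (a @ p @ b) \<and> hd (a @ p @ b) = s \<and> last (a @ p @ b) = t" .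
  qed
  show ?thesis
  proof (rule conjI[OF part1], intro allI impI)
    fix D' assume h: "orientation E D' \<and> acyclic D' \<and> {v\<in>V. is_source D' v} = {s} \<and> {v\<in>V. is_sink D' v} = {t}"
    show "(\<forall>p. simple_path V E p \<and> hd p = s \<and> last p = t \<longrightarrow> dir_path V D' p) \<and>
            (\<forall>p. dir_path V D' p \<longrightarrow>
               (\<exists>a b. dir_path V D' (a @ p @ b) \<and> hd (a @ p @ b) = s \<and> last (a @ p @ b) = t))"
      by (rule part2) (use h in auto)
  qed
qed


end
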